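(* For every integer $n\ge 2$ and every $s\in\mathbb{N}$, $\mathrm{ML}(1,2,\ldots,n-1,ns)=\frac{s}{ns+1}$.
   Context: For a real number $x$, $\Vert x\Vert$ denotes the distance from $x$ to the nearest integer. For positive integers $v_1,\ldots,v_n$, the maximum loneliness is $\mathrm{ML}(v_1,\ldots,v_n)=\max_{t\in\mathbb{R}}\min_{1\le i\le n}\Vert t v_i\Vert$. Here $\mathbb{N}=\{1,2,3,\ldots\}$. *)

theory Defs
  imports "HOL-Analysis.Analysis"
begin

definition dist_int :: "real \<Rightarrow> real" where
  "dist_int x = (INF k::int. \<bar>x - real_of_int k\<bar>)"

text \<open>Maximum loneliness of the velocities in a (nonempty) list v:
  max loneliness(v_1..v_n) = max over t of min over i of dist_int (t * v_i).
  The maximum is attained; we write it as the supremum.\<close>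
definition max_loneliness :: "nat list \<Rightarrow> real" where
  "max_loneliness vs = (SUP t::real. Min ((\<lambda>v. dist_int (t * real v)) ` set vs))"

end

theory Submission
  imports Defs
begin

lemma dist_int_le: "dist_int x \<le> \<bar>x - of_int k\<bar>"
proof -
  have bdd: "bdd_below (range (\<lambda>k::int. \<bar>x - of_int k\<bar>))"
    by (rule bdd_belowI[of _ 0]) auto
  show ?thesis unfolding dist_int_def by (rule cINF_lower[OF bdd]) simp
qed

lemma dist_int_min: "dist_int x = min (frac x) (1 - frac x)"
proof -
  have "dist_int x \<le> frac x" using dist_int_le[of x "floor x"] by (simp add: frac_def)
  moreover have "dist_int x \<le> 1 - frac x" using dist_int_le[of x "floor x + 1"]
    by (simp add: frac_def)
  moreover have "min (frac x) (1 - frac x) \<le> dist_int x" unfolding dist_int_def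
  proof (rule cINF_greatest)
    show "UNIV \<noteq> {}" by simp
    fix k :: int
    show "min (frac x) (1 - frac x) \<le> \<bar>x - of_int k\<bar>"
    proof (cases "k \<le> floor x")
      case True then have "real_of_int k \<le> of_int (floor x)" by linarith
      then show ?thesis by (simp add: frac_def)
    next
      case False then have "real_of_int k \<ge> of_int (floor x) + 1" by linarith
      then show ?thesis by (simp add: frac_def)
    qed
  qed
  ultimately show ?thesis by linarith
qed

lemma dist_int_ge0: "dist_int x \<ge> 0"
  by (simp add: dist_int_min frac_lt_1 less_imp_le)

lemma dist_int_le_frac: "dist_int x \<le> frac x" "dist_int x \<le> 1 - frac x"
  by (simp_all add: dist_int_min)

lemma dist_int_cases: "dist_int x = frac x \<or> dist_int x = 1 - frac x"
  by (simp add: dist_int_min min_def)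

lemma dist_int_half: "dist_int x \<le> 1/2"
  unfolding dist_int_min by linarith

lemma frac_diff: "\<bar>frac a - frac b\<bar> \<ge> dist_int (a - b)"
proof -
  have "frac a - frac b = (a - b) - of_int (floor a - floor b)" by (simp add: frac_def)
  then show ?thesis using dist_int_le[of "a - b" "floor a - floor b"] by simp
qed

lemma frac_diff_nat:
  assumes "j < i"
  shows "\<bar>frac (t * real i) - frac (t * real j)\<bar> \<ge> dist_int (t * real (i - j))"
proof -
  have "t * real (i - j) = t * real i - t * real j" using assms
    by (simp add: of_nat_diff right_diff_distrib)
  then show ?thesis using frac_diff by metis
qed

lemma dist_int_mult: "dist_int (real s * x) \<le> real s * dist_int x"
proof (cases "dist_int x = frac x")
  case True
  have "dist_int (real s * x) \<le> \<bar>real s * x - of_int (int s * floor x)\<bar>" by (rule dist_int_le)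
  also have "\<dots> = real s * frac x"
  proof -
    have "real s * x - of_int (int s * floor x) = real s * frac x" by (simp add: frac_def algebra_simps)
    then show ?thesis by simp
  qed
  finally show ?thesis using True by simp
next
  case False
  then have F: "dist_int x = 1 - frac x" using dist_int_cases by blast
  have "dist_int (real s * x) \<le> \<bar>real s * x - of_int (int s * (floor x + 1))\<bar>" by (rule dist_int_le)
  also have "\<dots> = real s * (1 - frac x)"
  proof -
    have "real s * x - of_int (int s * (floor x + 1)) = - (real s * (1 - frac x))" by (simp add: frac_def algebra_simps)
    then show ?thesis using frac_lt_1[of x] by simp
  qed
  finally show ?thesis using F by simp
qed

lemma pack_set_le:
  fixes S :: "real set"
  assumes "finite S" "S \<noteq> {}" "\<forall>x\<in>S. \<forall>y\<in>S. x \<noteq> y \<longrightarrow> \<bar>x - y\<bar> > d"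
  shows "real (card S - 1) * d \<le> Max S - Min S"
  using assms
proof (induction "card S" arbitrary: S rule: less_induct)
  case less
  show ?case
  proof (cases "card S = 1")
    case True
    have "Min S \<le> Max S" using less.prems by (meson Max_in Min_le)
    then show ?thesis using True by simp
  next
    case False
    define M where "M = Max S"
    define S' where "S' = S - {M}"
    have MS: "M \<in> S" unfolding M_def using less.prems Max_in by blast
    have cS: "card S \<ge> 2" using False less.prems card_0_eq by fastforce
    have cS': "card S' = card S - 1" unfolding S'_def using MS less.prems by simp
    have fS': "finite S'" unfolding S'_def using less.prems by simp
    have neS': "S' \<noteq> {}" using cS cS' fS' by auto
    have IH: "real (card S' - 1) * d \<le> Max S' - Min S'"
      using less.hyps[of S'] cS cS' fS' neS' less.prems(3) unfolding S'_def by auto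
    have mS': "Max S' \<in> S'" using fS' neS' by simp
    have "Max S' \<le> M" using mS' less.prems unfolding S'_def M_def by auto
    moreover have "Max S' \<noteq> M" using mS' unfolding S'_def by auto
    ultimately have "M - Max S' > d" using less.prems(3) MS mS' unfolding S'_def by force
    moreover have "Min S \<le> Min S'" using fS' neS' less.prems unfolding S'_def
      by (simp add: Min_antimono)
    moreover have "real (card S - 1) = real (card S' - 1) + 1" using cS cS' by simp
    ultimately show ?thesis using IH unfolding M_def by (simp add: algebra_simps)
  qed
qed

lemma pack_set:
  fixes S :: "real set"
  assumes "finite S" "card S \<ge> 2" "\<forall>x\<in>S. \<forall>y\<in>S. x \<noteq> y \<longrightarrow> \<bar>x - y\<bar> > d"
  shows "real (card S - 1) * d < Max S - Min S"
proof -
  define M where "M = Max S"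
  define S' where "S' = S - {M}"
  have neS: "S \<noteq> {}" using assms by auto
  have MS: "M \<in> S" unfolding M_def using assms neS Max_in by blast
  have cS': "card S' = card S - 1" unfolding S'_def using MS assms by simp
  have fS': "finite S'" unfolding S'_def using assms by simp
  have neS': "S' \<noteq> {}" using assms cS' fS' by auto
  have IH: "real (card S' - 1) * d \<le> Max S' - Min S'"
    using pack_set_le[of S' d] fS' neS' assms(3) unfolding S'_def by auto
  have mS': "Max S' \<in> S'" using fS' neS' by simp
  have "Max S' \<le> M" using mS' assms unfolding S'_def M_def by auto
  moreover have "Max S' \<noteq> M" using mS' unfolding S'_def by auto
  ultimately have "M - Max S' > d" using assms(3) MS mS' unfolding S'_def by force
  moreover have "Min S \<le> Min S'" using fS' neS' assms unfolding S'_def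
    by (simp add: Min_antimono)
  moreover have "real (card S - 1) = real (card S' - 1) + 1" using assms cS' by simp
  ultimately show ?thesis using IH unfolding M_def by (simp add: algebra_simps)
qed

lemma pack_fun:
  fixes p :: "nat \<Rightarrow> real"
  assumes "N \<ge> 1" "\<forall>i\<le>N. a \<le> p i \<and> p i \<le> b"
    "\<forall>i\<le>N. \<forall>j\<le>N. i \<noteq> j \<longrightarrow> \<bar>p i - p j\<bar> > d" "d \<ge> 0"
  shows "real N * d < b - a"
proof -
  define S where "S = p ` {0..N}"
  have inj: "inj_on p {0..N}"
  proof (rule inj_onI)
    fix i j assume "i \<in> {0..N}" "j \<in> {0..N}" "p i = p j"
    then show "i = j" using assms(3,4) by force
  qed
  have cS: "card S = N + 1" unfolding S_def using card_image[OF inj] by simp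
  have fS: "finite S" unfolding S_def by simp
  have sep: "\<forall>x\<in>S. \<forall>y\<in>S. x \<noteq> y \<longrightarrow> \<bar>x - y\<bar> > d"
    unfolding S_def using assms(3) by force
  have "real (card S - 1) * d < Max S - Min S"
    using pack_set[OF fS _ sep] cS assms(1) by simp
  moreover have "Max S \<le> b" using fS cS assms(2) unfolding S_def
    by (subst Max_le_iff) auto
  moreover have "Min S \<ge> a" using fS cS assms(2) unfolding S_def
    by (subst Min_ge_iff) auto
  ultimately show ?thesis using cS by simp
qed

lemma upper_main:
  fixes n s :: nat and t d :: real
  assumes n2: "n \<ge> 2" and s1: "s \<ge> 1" and dd: "d = real s / real (n * s + 1)"
    and P: "\<And>k. 1 \<le> k \<Longrightarrow> k < n \<Longrightarrow> dist_int (t * real k) > d"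
    and Q: "dist_int (t * real (n * s)) > d"
  shows False
proof -
  define f where "f k = frac (t * real k)" for k :: nat
  define g where "g k = dist_int (t * real k)" for k :: nat
  define y where "y = g n"
  define q where "q = real n * real s + 1"
  have qpos: "q > 0" unfolding q_def by (simp add: add_nonneg_pos)
  have dq: "d = real s / q" unfolding dd q_def by simp
  have sq: "real s * 2 < q"
  proof -
    have "real s * 2 \<le> real n * real s" using n2 s1 by (simp add: mult_right_mono)
    then show ?thesis unfolding q_def by simp
  qed
  have d0: "d \<ge> 0" unfolding dq using qpos by simp
  have dhalf: "1 - d > d" unfolding dq using qpos sq by (simp add: field_simps)
  have "t * real (n * s) = real s * (t * real n)" by simp
  then have "d < real s * y" using Q dist_int_mult[of s "t * real n"] unfolding y_def g_def
    by (metis order_less_le_trans)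
  then have ylow: "y * q > 1" unfolding dq using qpos s1 by (simp add: field_simps)
  have gf: "g k \<le> f k" "g k \<le> 1 - f k" for k unfolding g_def f_def by (simp_all add: dist_int_le_frac)
  have f01: "0 \<le> f k" "f k < 1" for k unfolding f_def by (simp_all add: frac_lt_1)
  have f0: "f 0 = 0" unfolding f_def by simp
  have fd: "\<bar>f i - f j\<bar> \<ge> g (i - j)" if "j < i" for i j
    unfolding f_def g_def using frac_diff_nat[OF that] by simp
  have Pg: "g k > d" if "1 \<le> k" "k < n" for k unfolding g_def using P that by simp
  have sym: "\<forall>i\<le>N. \<forall>j\<le>N. i \<noteq> j \<longrightarrow> \<bar>p i - p j\<bar> > d"
    if "\<And>i j. j < i \<Longrightarrow> i \<le> N \<Longrightarrow> \<bar>p i - p j\<bar> > d" for p :: "nat \<Rightarrow> real" and N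
  proof (intro allI impI)
    fix i j assume "i \<le> N" "j \<le> N" "i \<noteq> j"
    then show "\<bar>p i - p j\<bar> > d" using that[of j i] that[of i j] by (cases "j < i") (auto simp: abs_minus_commute)
  qed
  show False
  proof (cases "y > d")
    case True
    define p where "p i = (if i \<le> n then f i else 1)" for i
    have "real (n + 1) * d < 1 - 0"
    proof (rule pack_fun[of "n+1" 0 p 1 d])
      show "\<forall>i\<le>n + 1. 0 \<le> p i \<and> p i \<le> 1" unfolding p_def using f01 by (simp add: less_imp_le)
      show "\<forall>i\<le>n + 1. \<forall>j\<le>n + 1. i \<noteq> j \<longrightarrow> \<bar>p i - p j\<bar> > d"
      proof (rule sym)
        fix i j assume ji: "j < i" and iN: "i \<le> n + 1"
        have gk: "g k > d" if "1 \<le> k" "k \<le> n" for k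
          using Pg[of k] True that unfolding y_def by (cases "k = n") auto
        show "\<bar>p i - p j\<bar> > d"
        proof (cases "i = n + 1")
          case True
          then show ?thesis using ji gk[of j] gf[of j] f0 dhalf d0 unfolding p_def
            by (cases "j = 0") auto
        next
          case False
          then have i: "i \<le> n" using iN by simp
          show ?thesis
          proof (cases "j = 0")
            case True then show ?thesis using i ji gk[of i] gf[of i] f0 unfolding p_def by auto
          next
            case False
            have "d < g (i - j)" using gk[of "i - j"] i ji by simp
            then show ?thesis using False i ji fd[OF ji] unfolding p_def by auto
          qed
        qed
      qed
    qed (use d0 in auto)
    then have "(real n + 1) * real s < q" unfolding dq using qpos by (simp add: field_simps)
    then show False using s1 unfolding q_def by (simp add: algebra_simps)
  next
    case False
    then have yd: "y \<le> d" by simp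
    have "y = f n \<or> y = 1 - f n" unfolding y_def g_def f_def using dist_int_cases by blast
    then have "real n * d < 1 - y"
    proof
      assume fy: "y = f n"
      define p where "p i = (if i = 0 then y else if i = n then 1 else f i)" for i
      show "real n * d < 1 - y"
      proof (rule pack_fun[of n y p 1 d])
        show "\<forall>i\<le>n. y \<le> p i \<and> p i \<le> 1"
        proof (intro allI impI)
          fix i assume "i \<le> n"
          show "y \<le> p i \<and> p i \<le> 1"
          proof (cases "i = 0 \<or> i = n")
            case True then show ?thesis unfolding p_def using yd dhalf by auto
          next
            case False
            then have "d < g i" using Pg[of i] \<open>i \<le> n\<close> by simp
            then show ?thesis unfolding p_def using False gf[of i] f01[of i] yd by simp
          qed
        qed
        show "\<forall>i\<le>n. \<forall>j\<le>n. i \<noteq> j \<longrightarrow> \<bar>p i - p j\<bar> > d"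
        proof (rule sym)
          fix i j assume ji: "j < i" and iN: "i \<le> n"
          show "\<bar>p i - p j\<bar> > d"
          proof (cases "i = n")
            case True
            then show ?thesis using ji Pg[of j] gf[of j] dhalf yd n2 unfolding p_def
              by (cases "j = 0") auto
          next
            case False
            then have i: "i < n" using iN by simp
            show ?thesis
            proof (cases "j = 0")
              case True
              have "\<bar>f n - f i\<bar> \<ge> g (n - i)" using fd[of i n] i by simp
              moreover have "g (n - i) > d" using Pg[of "n - i"] i ji by simp
              ultimately show ?thesis using True i ji fy unfolding p_def by (auto simp: abs_minus_commute)
            next
              case False
              have "d < g (i - j)" using Pg[of "i - j"] i ji by simp
              then show ?thesis using False i ji fd[OF ji] unfolding p_def by auto
            qed
          qed
        qed
      qed (use d0 n2 in auto)
    next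
      assume fy: "y = 1 - f n"
      define p where "p i = (if i = 0 then 0 else if i = n then 1 - y else f i)" for i
      have "real n * d < (1 - y) - 0"
      proof (rule pack_fun[of n 0 p "1 - y" d])
        show "\<forall>i\<le>n. 0 \<le> p i \<and> p i \<le> 1 - y"
        proof (intro allI impI)
          fix i assume "i \<le> n"
          show "0 \<le> p i \<and> p i \<le> 1 - y"
          proof (cases "i = 0 \<or> i = n")
            case True then show ?thesis unfolding p_def using yd dhalf d0 by auto
          next
            case False
            then have "d < g i" using Pg[of i] \<open>i \<le> n\<close> by simp
            then show ?thesis unfolding p_def using False gf[of i] f01[of i] yd by simp
          qed
        qed
        show "\<forall>i\<le>n. \<forall>j\<le>n. i \<noteq> j \<longrightarrow> \<bar>p i - p j\<bar> > d"
        proof (rule sym)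
          fix i j assume ji: "j < i" and iN: "i \<le> n"
          show "\<bar>p i - p j\<bar> > d"
          proof (cases "i = n")
            case True
            show ?thesis
            proof (cases "j = 0")
              case True then show ?thesis using \<open>i = n\<close> n2 dhalf yd unfolding p_def by auto
            next
              case False
              have "\<bar>f n - f j\<bar> \<ge> g (n - j)" using fd[of j n] ji \<open>i = n\<close> by simp
              moreover have "g (n - j) > d" using Pg[of "n - j"] False ji \<open>i = n\<close> by simp
              ultimately show ?thesis using False \<open>i = n\<close> ji fy unfolding p_def by auto
            qed
          next
            case False
            then have i: "i < n" using iN by simp
            show ?thesis
            proof (cases "j = 0")
              case True then show ?thesis using i ji Pg[of i] gf[of i] unfolding p_def by auto
            next
              case False
              have "d < g (i - j)" using Pg[of "i - j"] i ji by simp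
              then show ?thesis using False i ji fd[OF ji] unfolding p_def by auto
            qed
          qed
        qed
      qed (use d0 n2 in auto)
      then show "real n * d < 1 - y" by simp
    qed
    then have "real n * real s < q * (1 - y)" unfolding dq using qpos by (simp add: field_simps)
    then have "real n * real s < q - y * q" by (simp add: algebra_simps)
    then have "y * q < 1" unfolding q_def by linarith
    then show False using ylow by simp
  qed
qed

theorem theorem5p1:
  fixes n s :: nat
  assumes "n \<ge> 2" and "s \<ge> 1"
  shows "max_loneliness ([1..<n] @ [n * s]) = real s / real (n * s + 1)"
proof -
  define d where "d = real s / real (n * s + 1)"
  define q where "q = real n * real s + 1"
  have qpos: "q > 0" unfolding q_def by (simp add: add_nonneg_pos)
  have dq: "d = real s / q" unfolding d_def q_def by simp
  define A where "A = set ([1..<n] @ [n * s])"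
  have A: "A = {1..<n} \<union> {n * s}" unfolding A_def by auto
  have fA: "finite A" and neA: "A \<noteq> {}" unfolding A by auto
  define F where "F t = Min ((\<lambda>v. dist_int (t * real v)) ` A)" for t
  have hsup: "max_loneliness ([1..<n] @ [n * s]) = (SUP t. F t)"
    unfolding max_loneliness_def F_def A_def by simp
  have Fle: "F t \<le> d" for t
  proof (rule ccontr)
    assume "\<not> F t \<le> d"
    then have "\<forall>v\<in>A. d < dist_int (t * real v)" unfolding F_def using fA neA
      by (simp add: not_le Min_gr_iff)
    then show False using upper_main[OF assms d_def, of t] unfolding A by auto
  qed
  have bdd: "bdd_above (range F)" using Fle by (intro bdd_aboveI[of _ d]) auto
  define t0 where "t0 = real s / q"
  have "d \<le> F t0" unfolding F_def
  proof (subst Min_ge_iff)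
    show "finite ((\<lambda>v. dist_int (t0 * real v)) ` A)" using fA by simp
    show "(\<lambda>v. dist_int (t0 * real v)) ` A \<noteq> {}" using neA by simp
    show "\<forall>a\<in>(\<lambda>v. dist_int (t0 * real v)) ` A. d \<le> a"
    proof
      fix a assume "a \<in> (\<lambda>v. dist_int (t0 * real v)) ` A"
      then obtain v where v: "v \<in> A" and a: "a = dist_int (t0 * real v)" by auto
      show "d \<le> a"
      proof (cases "v = n * s")
        case True
        have e1: "t0 * real v = real s * (real n * real s) / q" unfolding t0_def True by simp
        have e2: "real s - d = real s * (q - 1) / q" unfolding dq using qpos by (simp add: field_simps)
        have e: "t0 * real v = real s - d" using e1 e2 by (simp add: q_def)
        have sn: "real s \<le> real n * real s" using assms by (simp add: mult_right_mono)
        have sq: "real s < q" unfolding q_def using sn by simp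
        have d01: "0 < d" "d < 1" unfolding dq using qpos assms sq
          by (simp_all add: field_simps)
        have "real s - d - (1 - d) = of_int (int s - 1)" by simp
        then have "real s - d - (1 - d) \<in> \<int>" by (metis Ints_of_int)
        then have "frac (real s - d) = 1 - d" using d01 unfolding frac_unique_iff by simp
        have "real s * 2 \<le> real n * real s" using assms by (simp add: mult_right_mono)
        then have "real s * 2 \<le> q" unfolding q_def by simp
        then have "d \<le> 1 - d" unfolding dq using qpos by (simp add: field_simps)
        then show ?thesis unfolding a e dist_int_min using \<open>frac (real s - d) = 1 - d\<close> by simp
      next
        case False
        then have v1: "1 \<le> v" "v < n" using v unfolding A by auto
        have x: "t0 * real v = real s * real v / q" unfolding t0_def by simp
        have "real s * real v + real s \<le> q"
        proof -
          have "real s * (real v + 1) \<le> real s * real n" using v1 by (intro mult_left_mono) auto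
          then show ?thesis unfolding q_def by (simp add: algebra_simps)
        qed
        then have lt1: "real s * real v / q < 1" and ge: "d \<le> real s * real v / q"
          and ge2: "d \<le> 1 - real s * real v / q"
          using qpos v1 assms unfolding dq by (simp_all add: field_simps)
        have "frac (t0 * real v) = t0 * real v" unfolding x using lt1 qpos
          by (simp add: frac_eq)
        then show ?thesis unfolding a dist_int_min using ge ge2 x by simp
      qed
    qed
  qed
  then have "d \<le> (SUP t. F t)" using bdd by (intro cSUP_upper2) auto
  moreover have "(SUP t. F t) \<le> d" using Fle by (intro cSUP_least) auto
  ultimately show ?thesis unfolding hsup d_def by simp
qed

end
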